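(* Let $X,Y$ be mm-spaces and let $\varphi:I\to X$, $\psi:I\to Y$ be parameters of $X$ and $Y$. Then \[ \square(\varphi^*d_X,\psi^*d_Y)=\operatorname{dis}\big((\varphi,\psi)_*\mathcal L^1\big). \]
   Context: An mm-space is a complete separable metric space with a Borel probability measure. $I=[0,1)$ with Lebesgue measure $\mathcal L^1$; a parameter of $X$ is a Borel $\varphi:I\to X$ with $\varphi_*\mathcal L^1=m_X$; $\varphi^*d_X(s,t):=d_X(\varphi(s),\varphi(t))$. For pseudo-metrics $\rho_1,\rho_2$ on $I$, $\square(\rho_1,\rho_2)$ is the infimum of $\varepsilon\ge0$ such that some Borel $I_0\subset I$ has $\mathcal L^1(I_0)\ge1-\varepsilon$ and $|\rho_1(s,t)-\rho_2(s,t)|\le\varepsilon$ for all $s,t\in I_0$. For nonempty $S\subset X\times Y$, $\operatorname{dis}S:=\sup\{|d_X(x,x')-d_Y(y,y')|:(x,y),(x',y')\in S\}$, $\operatorname{dis}\emptyset:=\infty$; for a Borel probability measure $\pi$ on $X\times Y$, $\operatorname{dis}\pi:=\inf_S\max\{\operatorname{dis}S,1-\pi(S)\}$ over closed $S\subset X\times Y$. *)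

theory Defs
  imports "HOL-Probability.Probability"
begin

definition unitI :: "real measure" where
  "unitI = restrict_space lborel {0..<1}"

definition mm_space :: "'a::polish_space measure \<Rightarrow> bool" where
  "mm_space m \<longleftrightarrow> sets m = sets borel \<and> prob_space m"

definition parameter :: "(real \<Rightarrow> 'a::polish_space) \<Rightarrow> 'a measure \<Rightarrow> bool" where
  "parameter \<phi> m \<longleftrightarrow> \<phi> \<in> borel_measurable unitI \<and> distr unitI borel \<phi> = m"

definition pullback_dist :: "(real \<Rightarrow> 'a::metric_space) \<Rightarrow> real \<Rightarrow> real \<Rightarrow> real" where
  "pullback_dist \<phi> s t = dist (\<phi> s) (\<phi> t)"

definition box_dist :: "(real \<Rightarrow> real \<Rightarrow> real) \<Rightarrow> (real \<Rightarrow> real \<Rightarrow> real) \<Rightarrow> real" where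
  "box_dist \<rho>1 \<rho>2 = Inf {\<epsilon>. \<epsilon> \<ge> 0 \<and> (\<exists>I0. I0 \<in> sets borel \<and> I0 \<subseteq> {0..<1} \<and>
       measure lborel I0 \<ge> 1 - \<epsilon> \<and>
       (\<forall>s\<in>I0. \<forall>t\<in>I0. \<bar>\<rho>1 s t - \<rho>2 s t\<bar> \<le> \<epsilon>))}"

definition dis_set :: "('a::metric_space \<times> 'b::metric_space) set \<Rightarrow> ereal" where
  "dis_set S = (if S = {} then \<infinity> else
     (SUP p\<in>S \<times> S. ereal \<bar>dist (fst (fst p)) (fst (snd p)) - dist (snd (fst p)) (snd (snd p))\<bar>))"

definition dis_measure :: "('a::metric_space \<times> 'b::metric_space) measure \<Rightarrow> ereal" where
  "dis_measure \<pi> = (INF S\<in>{S. closed S}. max (dis_set S) (ereal (1 - measure \<pi> S)))"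

end

theory Submission
  imports Defs
begin

theorem lemma4p3:
  fixes mX :: "'a::polish_space measure" and mY :: "'b::polish_space measure"
    and \<phi> :: "real \<Rightarrow> 'a" and \<psi> :: "real \<Rightarrow> 'b"
  assumes "mm_space mX" and "mm_space mY"
    and "parameter \<phi> mX" and "parameter \<psi> mY"
  shows "ereal (box_dist (pullback_dist \<phi>) (pullback_dist \<psi>))
           = dis_measure (distr unitI borel (\<lambda>s. (\<phi> s, \<psi> s)))"
proof -
  define f where "f = (\<lambda>s. (\<phi> s, \<psi> s))"
  define \<pi> where "\<pi> = distr unitI borel f"
  define B where "B = {\<epsilon>. \<epsilon> \<ge> 0 \<and> (\<exists>I0. I0 \<in> sets borel \<and> I0 \<subseteq> {0..<1} \<and>
       measure lborel I0 \<ge> 1 - \<epsilon> \<and>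
       (\<forall>s\<in>I0. \<forall>t\<in>I0. \<bar>pullback_dist \<phi> s t - pullback_dist \<psi> s t\<bar> \<le> \<epsilon>))}"
  have bd: "box_dist (pullback_dist \<phi>) (pullback_dist \<psi>) = Inf B"
    unfolding box_dist_def B_def by simp
  have spU: "space unitI = {0..<1}" unfolding unitI_def by (simp add: space_restrict_space)
  have Om: "{0..<1::real} \<inter> space lborel \<in> sets lborel" by simp
  have setsU: "A \<in> sets unitI \<longleftrightarrow> A \<subseteq> {0..<1} \<and> A \<in> sets borel" for A
    unfolding unitI_def using sets_restrict_space_iff[OF Om] by simp
  have measU: "A \<subseteq> {0..<1} \<Longrightarrow> measure unitI A = measure lborel A" for A
    unfolding unitI_def using measure_restrict_space[OF Om] by simp
  have fm: "f \<in> borel_measurable unitI"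
  proof -
    have "f \<in> measurable unitI (borel \<Otimes>\<^sub>M borel)"
      unfolding f_def using assms(3,4) unfolding parameter_def by (intro measurable_Pair) auto
    thus ?thesis by (simp add: borel_prod)
  qed
  have finU: "finite_measure unitI"
  proof (rule finite_measureI)
    have "emeasure unitI (space unitI) = emeasure lborel {0..<1::real}"
      unfolding unitI_def by (subst emeasure_restrict_space) (auto simp: space_restrict_space)
    thus "emeasure unitI (space unitI) \<noteq> \<infinity>" by simp
  qed
  have Bne: "1 \<in> B" unfolding B_def by (intro CollectI conjI exI[of _ "{}"]) auto
  have Bbdd: "bdd_below B" unfolding B_def by (intro bdd_belowI[of _ 0]) auto
  have abs_eq: "pullback_dist \<phi> s t = dist (fst (f s)) (fst (f t))"
     "pullback_dist \<psi> s t = dist (snd (f s)) (snd (f t))" for s t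
    by (simp_all add: pullback_dist_def f_def)
  have a: "dis_measure \<pi> \<le> ereal \<epsilon>" if "\<epsilon> \<in> B" for \<epsilon>
  proof -
    from that obtain I0 where e0: "\<epsilon> \<ge> 0" and I0: "I0 \<in> sets borel" "I0 \<subseteq> {0..<1}"
      "measure lborel I0 \<ge> 1 - \<epsilon>"
      and bound: "\<forall>s\<in>I0. \<forall>t\<in>I0. \<bar>pullback_dist \<phi> s t - pullback_dist \<psi> s t\<bar> \<le> \<epsilon>"
      unfolding B_def by blast
    show ?thesis
    proof (cases "\<epsilon> \<ge> 1")
      case True
      define S where "S = {f 0}"
      have "closed S" unfolding S_def by simp
      hence "dis_measure \<pi> \<le> max (dis_set S) (ereal (1 - measure \<pi> S))"
        unfolding dis_measure_def by (intro INF_lower) auto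
      also have "dis_set S = 0" unfolding dis_set_def S_def by simp
      also have "max 0 (ereal (1 - measure \<pi> S)) \<le> ereal \<epsilon>"
      proof -
        have "0 \<le> measure \<pi> S" by simp
        hence "1 - measure \<pi> S \<le> \<epsilon>" using True by linarith
        hence "ereal (1 - measure \<pi> S) \<le> ereal \<epsilon>" by simp
        moreover have "(0::ereal) \<le> ereal \<epsilon>" using True by simp
        ultimately show ?thesis by (intro max.boundedI)
      qed
      finally show ?thesis .
    next
      case False
      hence "I0 \<noteq> {}" using I0(3) by auto
      define S where "S = closure (f ` I0)"
      have "closed S" unfolding S_def by simp
      hence "dis_measure \<pi> \<le> max (dis_set S) (ereal (1 - measure \<pi> S))"
        unfolding dis_measure_def by (intro INF_lower) auto
      also have "\<dots> \<le> ereal \<epsilon>"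
      proof (rule max.boundedI)
        define T where "T = {z :: ('a \<times> 'b) \<times> ('a \<times> 'b).
           \<bar>dist (fst (fst z)) (fst (snd z)) - dist (snd (fst z)) (snd (snd z))\<bar> \<le> \<epsilon>}"
        have cT: "closed T" unfolding T_def
          by (intro closed_Collect_le continuous_intros)
        have "f ` I0 \<times> f ` I0 \<subseteq> T" unfolding T_def using bound by (auto simp: abs_eq)
        hence "closure (f ` I0 \<times> f ` I0) \<subseteq> T" using cT by (rule closure_minimal)
        hence ST: "S \<times> S \<subseteq> T" unfolding S_def closure_Times .
        have "S \<noteq> {}" unfolding S_def using \<open>I0 \<noteq> {}\<close> by auto
        then show "dis_set S \<le> ereal \<epsilon>" unfolding dis_set_def
          using ST by (auto intro!: SUP_least simp: T_def)
      next
        have m1: "I0 \<in> sets unitI" using I0 setsU by auto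
        have m2: "f -` S \<inter> space unitI \<in> sets unitI"
          using fm \<open>closed S\<close> by (intro measurable_sets[OF fm]) auto
        have "measure \<pi> S = measure unitI (f -` S \<inter> space unitI)"
          unfolding \<pi>_def using fm \<open>closed S\<close> by (subst measure_distr) auto
        also have "\<dots> \<ge> measure unitI I0"
          using I0 spU closure_subset[of "f ` I0"]
          by (intro finite_measure.finite_measure_mono[OF finU] m2) (auto simp: S_def)
        finally have "measure \<pi> S \<ge> measure lborel I0" using measU[OF I0(2)] by simp
        thus "ereal (1 - measure \<pi> S) \<le> ereal \<epsilon>" using I0(3) by simp
      qed
      finally show ?thesis .
    qed
  qed
  have b: "ereal (Inf B) \<le> max (dis_set S) (ereal (1 - measure \<pi> S))" if "closed S" for S
  proof (cases "max (dis_set S) (ereal (1 - measure \<pi> S)) = \<infinity>")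
    case True then show ?thesis by simp
  next
    case False
    define e where "e = max (dis_set S) (ereal (1 - measure \<pi> S))"
    have ef: "e \<noteq> \<infinity>" using False e_def by simp
    have "e \<ge> ereal (1 - measure \<pi> S)" unfolding e_def by simp
    then obtain \<epsilon> where e\<epsilon>: "e = ereal \<epsilon>" using ef by (cases e) auto
    have "dis_set S \<le> e" "ereal (1 - measure \<pi> S) \<le> e" unfolding e_def by simp_all
    hence dis: "dis_set S \<le> ereal \<epsilon>" and pS: "1 - measure \<pi> S \<le> \<epsilon>"
      using e\<epsilon> by simp_all
    have "S \<noteq> {}" using dis unfolding dis_set_def by auto
    then obtain p where p: "p \<in> S" by auto
    have "ereal \<bar>dist (fst (fst (p,p))) (fst (snd (p,p))) - dist (snd (fst (p,p))) (snd (snd (p,p)))\<bar>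
        \<le> dis_set S" unfolding dis_set_def using \<open>S \<noteq> {}\<close> p
      by (auto intro!: SUP_upper2[of "(p,p)"])
    hence "0 \<le> dis_set S" by (simp add: zero_ereal_def)
    hence "(0::ereal) \<le> ereal \<epsilon>" using dis by (rule order.trans)
    hence e0: "\<epsilon> \<ge> 0" by simp
    define I0 where "I0 = f -` S \<inter> {0..<1}"
    have m2: "f -` S \<inter> space unitI \<in> sets unitI"
      using fm \<open>closed S\<close> by (intro measurable_sets[OF fm]) auto
    hence I0s: "I0 \<in> sets borel" "I0 \<subseteq> {0..<1}" unfolding I0_def using setsU spU by auto
    have "measure \<pi> S = measure unitI I0"
      unfolding \<pi>_def I0_def using fm \<open>closed S\<close> spU by (subst measure_distr) auto
    also have "\<dots> = measure lborel I0" using measU[OF I0s(2)] .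
    finally have mI: "measure lborel I0 \<ge> 1 - \<epsilon>" using pS by simp
    have bnd: "\<bar>pullback_dist \<phi> s t - pullback_dist \<psi> s t\<bar> \<le> \<epsilon>" if "s \<in> I0" "t \<in> I0" for s t
    proof -
      have "(f s, f t) \<in> S \<times> S" using that unfolding I0_def by auto
      hence "ereal \<bar>dist (fst (fst (f s, f t))) (fst (snd (f s, f t))) - dist (snd (fst (f s, f t))) (snd (snd (f s, f t)))\<bar>
        \<le> dis_set S" unfolding dis_set_def using \<open>S \<noteq> {}\<close>
        by (auto intro!: SUP_upper2[of "(f s, f t)"])
      hence "ereal \<bar>dist (fst (fst (f s, f t))) (fst (snd (f s, f t))) - dist (snd (fst (f s, f t))) (snd (snd (f s, f t)))\<bar> \<le> ereal \<epsilon>"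
        using dis by (rule order.trans)
      thus ?thesis by (simp add: abs_eq)
    qed
    have "\<epsilon> \<in> B" unfolding B_def using e0 I0s mI bnd by blast
    hence "Inf B \<le> \<epsilon>" using Bbdd by (rule cInf_lower)
    thus ?thesis using e\<epsilon> e_def by simp
  qed
  have "dis_measure \<pi> = ereal (Inf B)"
  proof (rule antisym)
    show "ereal (Inf B) \<le> dis_measure \<pi>" unfolding dis_measure_def
      by (intro INF_greatest b) auto
    show "dis_measure \<pi> \<le> ereal (Inf B)"
      unfolding ereal_Inf'[OF Bbdd Bne[THEN ex_in_conv[THEN iffD1, OF exI], simplified]]
      by (rule INF_greatest) (rule a)
  qed
  thus ?thesis using bd \<pi>_def f_def by simp
qed

end
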